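(* Let $k$ be a field, $(X,\leq)$ a locally finite preordered set and $C=IC(X)$ its incidence coalgebra. Let $(\mathcal C_i)_{i\in I}$ be the equivalence classes of $\sim$ and $D_i=\sum_{x,y\in\mathcal C_i}k e_{x,y}$. Then: (i) the coradical $C_0$ of $C$ equals $\sum_{i\in I}D_i$; (ii) for every $n\geq 0$, the $(n+1)$-th term $C_n$ of the coradical filtration of $C$ is the subspace spanned by all $e_{x,y}$ such that the interval $[x,y]$ has length at most $n$.
   Context: A preorder is reflexive and transitive; $(X,\leq)$ is locally finite if each $[x,y]=\{z\mid x\leq z\leq y\}$ is finite. $IC(X)$ has $k$-basis $\{e_{x,y}\mid x\leq y\}$, comultiplication $\Delta(e_{x,y})=\sum_{x\leq z\leq y}e_{x,z}\otimes e_{z,y}$ and counit $\varepsilon(e_{x,y})=\delta_{x,y}$. $x\sim y$ means $x\leq y$ and $y\leq x$. The coradical $C_0$ is the sum of all simple subcoalgebras; for subspaces $U,V$, $U\wedge V=\Delta^{-1}(U\otimes C+C\otimes V)$, and $C_n=C_0\wedge C_{n-1}$ for $n\ge1$. For $x\leq y$, the length of $[x,y]$ is $0$ if $x\sim y$, and otherwise is the greatest $n>0$ such that there is a chain $x=x_0<x_1<\cdots<x_n=y$ in $X$ (where $a<b$ means $a\leq b$ and not $b\leq a$). *)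

theory Defs
  imports Main "HOL.Modules" "HOL-Library.Function_Algebras"
begin

definition fscale :: "'k::field \<Rightarrow> ('p \<Rightarrow> 'k) \<Rightarrow> ('p \<Rightarrow> 'k)" where
  "fscale c f = (\<lambda>p. c * f p)"

abbreviation kspan :: "('p \<Rightarrow> 'k::field) set \<Rightarrow> ('p \<Rightarrow> 'k) set" where
  "kspan S \<equiv> module.span fscale S"

abbreviation ksubspace :: "('p \<Rightarrow> 'k::field) set \<Rightarrow> bool" where
  "ksubspace S \<equiv> module.subspace fscale S"

definition locally_finite :: "'a::preorder itself \<Rightarrow> bool" where
  "locally_finite _ \<longleftrightarrow> (\<forall>x y::'a. finite {z. x \<le> z \<and> z \<le> y})"

text \<open>IC(X): the k-space with basis e_{x,y}, x \<le> y, i.e. finitely supported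
  coefficient functions on the pairs (x,y) with x \<le> y.\<close>
definition IC :: "('a::preorder \<times> 'a \<Rightarrow> 'k::field) set" where
  "IC = {f. finite {p. f p \<noteq> 0} \<and> (\<forall>a b. f (a, b) \<noteq> 0 \<longrightarrow> a \<le> b)}"

definition ebasis :: "'a \<Rightarrow> 'a \<Rightarrow> ('a \<times> 'a \<Rightarrow> 'k::field)" where
  "ebasis x y = (\<lambda>p. if p = (x, y) then 1 else 0)"

text \<open>IC(X) \<otimes> IC(X), with basis e_{a,b} \<otimes> e_{c,d}, represented by coefficient functions.\<close>
definition ICtensor :: "(('a::preorder \<times> 'a) \<times> ('a \<times> 'a) \<Rightarrow> 'k::field) set" where
  "ICtensor = {g. finite {q. g q \<noteq> 0} \<and>
     (\<forall>a b c d. g ((a, b), (c, d)) \<noteq> 0 \<longrightarrow> a \<le> b \<and> c \<le> d)}"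

definition tens :: "('p \<Rightarrow> 'k::field) \<Rightarrow> ('p \<Rightarrow> 'k) \<Rightarrow> ('p \<times> 'p \<Rightarrow> 'k)" where
  "tens u v = (\<lambda>(p, q). u p * v q)"

text \<open>Comultiplication: the linear extension of
  Delta(e_{x,y}) = sum_{x \<le> z \<le> y} e_{x,z} \<otimes> e_{z,y}, written coefficientwise.\<close>
definition Delta :: "('a::preorder \<times> 'a \<Rightarrow> 'k::field) \<Rightarrow> (('a \<times> 'a) \<times> ('a \<times> 'a) \<Rightarrow> 'k)" where
  "Delta f = (\<lambda>((a, b), (c, d)). if b = c \<and> a \<le> b \<and> c \<le> d then f (a, d) else 0)"

text \<open>Counit: the linear extension of epsilon(e_{x,y}) = delta_{x,y}.\<close>
definition counit :: "('a::preorder \<times> 'a \<Rightarrow> 'k::field) \<Rightarrow> 'k" where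
  "counit f = (\<Sum>x\<in>{x. f (x, x) \<noteq> 0}. f (x, x))"

definition tensor_sub :: "('a::preorder \<times> 'a \<Rightarrow> 'k::field) set \<Rightarrow> ('a \<times> 'a \<Rightarrow> 'k) set
    \<Rightarrow> (('a \<times> 'a) \<times> ('a \<times> 'a) \<Rightarrow> 'k) set" where
  "tensor_sub U V = kspan {tens u v | u v. u \<in> U \<and> v \<in> V}"

definition subcoalgebra :: "('a::preorder \<times> 'a \<Rightarrow> 'k::field) set \<Rightarrow> bool" where
  "subcoalgebra D \<longleftrightarrow> D \<subseteq> IC \<and> ksubspace D \<and> Delta ` D \<subseteq> tensor_sub D D"

definition simple_subcoalgebra :: "('a::preorder \<times> 'a \<Rightarrow> 'k::field) set \<Rightarrow> bool" where
  "simple_subcoalgebra D \<longleftrightarrow> subcoalgebra D \<and> D \<noteq> {0} \<and>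
     (\<forall>E. subcoalgebra E \<and> E \<subseteq> D \<longrightarrow> E = {0} \<or> E = D)"

definition coradical :: "('a::preorder \<times> 'a \<Rightarrow> 'k::field) set" where
  "coradical = kspan (\<Union>{D. simple_subcoalgebra D})"

definition wedge :: "('a::preorder \<times> 'a \<Rightarrow> 'k::field) set \<Rightarrow> ('a \<times> 'a \<Rightarrow> 'k) set
    \<Rightarrow> ('a \<times> 'a \<Rightarrow> 'k) set" where
  "wedge U V = {c \<in> IC. Delta c \<in> kspan (tensor_sub U IC \<union> tensor_sub IC V)}"

primrec coradical_filt :: "nat \<Rightarrow> ('a::preorder \<times> 'a \<Rightarrow> 'k::field) set" where
  "coradical_filt 0 = coradical"
| "coradical_filt (Suc n) = wedge coradical (coradical_filt n)"

definition equiv_rel :: "('a::preorder \<times> 'a) set" where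
  "equiv_rel = {(x, y). x \<le> y \<and> y \<le> x}"

definition sim_classes :: "'a::preorder set set" where
  "sim_classes = UNIV // equiv_rel"

definition Dblock :: "'a::preorder set \<Rightarrow> ('a \<times> 'a \<Rightarrow> 'k::field) set" where
  "Dblock Ci = kspan {ebasis x y | x y. x \<in> Ci \<and> y \<in> Ci}"

definition has_chain :: "'a::preorder \<Rightarrow> 'a \<Rightarrow> nat \<Rightarrow> bool" where
  "has_chain x y n \<longleftrightarrow> (\<exists>f::nat \<Rightarrow> 'a. f 0 = x \<and> f n = y \<and> (\<forall>i<n. f i < f (Suc i)))"

definition interval_length :: "'a::preorder \<Rightarrow> 'a \<Rightarrow> nat" where
  "interval_length x y =
     (if x \<le> y \<and> y \<le> x then 0 else (GREATEST n. n > 0 \<and> has_chain x y n))"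

end

theory Submission
  imports Defs
begin

interpretation fs: module "fscale :: 'k::field \<Rightarrow> ('p \<Rightarrow> 'k) \<Rightarrow> ('p \<Rightarrow> 'k)"
  by unfold_locales (auto simp: fscale_def fun_eq_iff algebra_simps)

lemma sum_app: "finite A \<Longrightarrow> (sum f A) x = (\<Sum>a\<in>A. f a x)"
  by (induct rule: finite_induct) auto

definition FS :: "'p set \<Rightarrow> ('p \<Rightarrow> 'k::field) set" where
  "FS A = {g. finite {p. g p \<noteq> 0} \<and> {p. g p \<noteq> 0} \<subseteq> A}"

definition eb :: "'p \<Rightarrow> 'p \<Rightarrow> 'k::field" where
  "eb r = (\<lambda>p. if p = r then 1 else 0)"

lemma FS_subspace: "ksubspace (FS A :: ('p \<Rightarrow> 'k::field) set)"
  unfolding fs.subspace_def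
proof (intro conjI ballI allI)
  show "0 \<in> (FS A :: ('p \<Rightarrow> 'k::field) set)" by (simp add: FS_def)
next
  fix f g :: "'p \<Rightarrow> 'k" assume f: "f \<in> FS A" and g: "g \<in> FS A"
  have a: "{p. (f + g) p \<noteq> (0::'k)} \<subseteq> {p. f p \<noteq> 0} \<union> {p. g p \<noteq> 0}" by auto
  show "f + g \<in> FS A" using f g a unfolding FS_def by (auto intro: finite_subset)
next
  fix c and f :: "'p \<Rightarrow> 'k" assume f: "f \<in> FS A"
  have b: "{p. fscale c f p \<noteq> (0::'k)} \<subseteq> {p. f p \<noteq> 0}" by (auto simp: fscale_def)
  show "fscale c f \<in> FS A" using f b unfolding FS_def by (auto intro: finite_subset)
qed

lemma FS_mono: "A \<subseteq> B \<Longrightarrow> FS A \<subseteq> FS B"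
  by (auto simp: FS_def)

lemma eb_FS: "r \<in> A \<Longrightarrow> eb r \<in> FS A"
  by (auto simp: eb_def FS_def)

lemma FS_decomp:
  assumes "g \<in> FS A"
  shows "g = (\<Sum>p\<in>{p. g p \<noteq> 0}. fscale (g p) (eb p))"
proof
  fix x
  have fin: "finite {p. g p \<noteq> 0}" using assms by (auto simp: FS_def)
  have "(\<Sum>p\<in>{p. g p \<noteq> 0}. fscale (g p) (eb p)) x = (\<Sum>p\<in>{p. g p \<noteq> 0}. g p * eb p x)"
    by (simp add: sum_app[OF fin] fscale_def)
  also have "\<dots> = g x"
  proof (cases "g x = 0")
    case True
    then show ?thesis by (auto simp: eb_def split: if_splits intro!: sum.neutral)
  next
    case False
    then have "(\<Sum>p\<in>{p. g p \<noteq> 0}. g p * eb p x) = g x * eb x x + (\<Sum>p\<in>{p. g p \<noteq> 0} - {x}. g p * eb p x)"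
      using fin by (simp add: sum.remove)
    also have "\<dots> = g x" by (auto simp: eb_def split: if_splits intro!: sum.neutral)
    finally show ?thesis .
  qed
  finally show "g x = (\<Sum>p\<in>{p. g p \<noteq> 0}. fscale (g p) (eb p)) x" by simp
qed

lemma span_eb: "kspan (eb ` A) = (FS A :: ('p \<Rightarrow> 'k::field) set)"
proof
  show "kspan (eb ` A) \<subseteq> (FS A :: ('p \<Rightarrow> 'k::field) set)"
    by (rule fs.span_minimal) (auto intro: eb_FS FS_subspace)
  show "FS A \<subseteq> kspan (eb ` A :: ('p \<Rightarrow> 'k::field) set)"
  proof
    fix g :: "'p \<Rightarrow> 'k" assume g: "g \<in> FS A"
    show "g \<in> kspan (eb ` A)"
      apply (subst FS_decomp[OF g])
      apply (rule fs.span_sum)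
      apply (rule fs.span_scale)
      apply (rule fs.span_base)
      using g by (auto simp: FS_def)
  qed
qed

lemma ebasis_eb: "ebasis x y = eb (x, y)"
  by (simp add: ebasis_def eb_def)

lemma tens_eb: "tens (eb p) (eb q) = eb (p, q)"
  by (auto simp: tens_def eb_def fun_eq_iff)

lemma IC_FS: "IC = FS {(a, b). a \<le> b}"
  by (auto simp: IC_def FS_def)

lemma tens_FS:
  assumes "u \<in> FS P" "v \<in> FS Q"
  shows "tens u v \<in> FS (P \<times> Q)"
proof -
  have "{pq. tens u v pq \<noteq> 0} \<subseteq> {p. u p \<noteq> 0} \<times> {q. v q \<noteq> 0}"
    by (auto simp: tens_def)
  moreover have "finite ({p. u p \<noteq> 0} \<times> {q. v q \<noteq> 0})" using assms by (auto simp: FS_def)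
  ultimately show ?thesis using assms unfolding FS_def by (auto intro: finite_subset)
qed

lemma tensor_sub_FS: "tensor_sub (FS P) (FS Q) = FS (P \<times> Q)"
proof
  show "tensor_sub (FS P) (FS Q) \<subseteq> FS (P \<times> Q)"
    unfolding tensor_sub_def
    by (rule fs.span_minimal) (auto intro: tens_FS FS_subspace)
  have "eb ` (P \<times> Q) \<subseteq> {tens u v |u v. u \<in> FS P \<and> v \<in> FS Q}"
  proof
    fix x assume "x \<in> eb ` (P \<times> Q)"
    then obtain p q where "p \<in> P" "q \<in> Q" "x = eb (p, q)" by auto
    then show "x \<in> {tens u v |u v. u \<in> FS P \<and> v \<in> FS Q}"
      by (auto simp: tens_eb[symmetric] intro!: exI eb_FS)
  qed
  then have "kspan (eb ` (P \<times> Q)) \<subseteq> tensor_sub (FS P) (FS Q)"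
    unfolding tensor_sub_def by (rule fs.span_mono)
  then show "FS (P \<times> Q) \<subseteq> tensor_sub (FS P) (FS Q)" by (simp add: span_eb)
qed

lemma span_FS_Un: "kspan (FS A \<union> FS B) = FS (A \<union> B)"
proof
  show "kspan (FS A \<union> FS B) \<subseteq> FS (A \<union> B)"
    apply (rule fs.span_minimal)
     apply (auto simp: FS_def)[1]
    apply (rule FS_subspace)
    done
  have "eb ` (A \<union> B) \<subseteq> FS A \<union> FS B" by (auto intro: eb_FS)
  then have "kspan (eb ` (A \<union> B)) \<subseteq> kspan (FS A \<union> FS B)" by (rule fs.span_mono)
  then show "FS (A \<union> B) \<subseteq> kspan (FS A \<union> FS B)" by (simp add: span_eb)
qed

lemma lfD: "locally_finite TYPE('a::preorder) \<Longrightarrow> finite {z::'a. x \<le> z \<and> z \<le> y}"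
  by (simp add: locally_finite_def)

lemma Delta_supp:
  "{q. Delta f q \<noteq> 0} = (\<lambda>((a, d), z). ((a, z), (z, d))) ` (SIGMA ad:{p. f p \<noteq> 0}. {z. fst ad \<le> z \<and> z \<le> snd ad})"
  by (auto simp: Delta_def image_iff split: if_splits)

lemma Delta_FS:
  assumes lf: "locally_finite TYPE('a::preorder)" and f: "(f :: 'a \<times> 'a \<Rightarrow> 'k::field) \<in> IC"
  shows "Delta f \<in> FS S \<longleftrightarrow> (\<forall>a d z. f (a, d) \<noteq> 0 \<longrightarrow> a \<le> z \<longrightarrow> z \<le> d \<longrightarrow> ((a, z), (z, d)) \<in> S)"
proof -
  have fin: "finite {q. Delta f q \<noteq> 0}"
    unfolding Delta_supp
    using f lfD[OF lf] by (auto simp: IC_def intro!: finite_imageI finite_SigmaI)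
  show ?thesis
  proof
    assume "Delta f \<in> FS S"
    then have sub: "{q. Delta f q \<noteq> 0} \<subseteq> S" by (simp add: FS_def)
    show "\<forall>a d z. f (a, d) \<noteq> 0 \<longrightarrow> a \<le> z \<longrightarrow> z \<le> d \<longrightarrow> ((a, z), (z, d)) \<in> S"
    proof (intro allI impI)
      fix a d z assume "f (a, d) \<noteq> 0" "a \<le> z" "z \<le> d"
      then have "Delta f ((a, z), (z, d)) \<noteq> 0" by (simp add: Delta_def)
      then show "((a, z), (z, d)) \<in> S" using sub by auto
    qed
  next
    assume R: "\<forall>a d z. f (a, d) \<noteq> 0 \<longrightarrow> a \<le> z \<longrightarrow> z \<le> d \<longrightarrow> ((a, z), (z, d)) \<in> S"
    have "{q. Delta f q \<noteq> 0} \<subseteq> S"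
    proof
      fix q assume "q \<in> {q. Delta f q \<noteq> 0}"
      moreover obtain a b c d where q: "q = ((a, b), (c, d))" by (metis prod.collapse)
      ultimately show "q \<in> S" using R by (auto simp: Delta_def split: if_splits)
    qed
    then show "Delta f \<in> FS S" using fin by (simp add: FS_def)
  qed
qed

lemma subco_eval:
  assumes D: "subcoalgebra D" and f: "f \<in> D"
  shows "(\<lambda>p. Delta f (p, q)) \<in> D \<and> (\<lambda>p. Delta f (q, p)) \<in> D"
proof -
  have sD: "ksubspace D" and DD: "Delta f \<in> tensor_sub D D"
    using D f by (auto simp: subcoalgebra_def)
  let ?G = "{g. (\<lambda>p. g (p, q)) \<in> D \<and> (\<lambda>p. g (q, p)) \<in> D}"
  have "tensor_sub D D \<subseteq> ?G"
    unfolding tensor_sub_def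
  proof (rule fs.span_minimal)
    show "{tens u v |u v. u \<in> D \<and> v \<in> D} \<subseteq> ?G"
    proof
      fix x assume "x \<in> {tens u v |u v. u \<in> D \<and> v \<in> D}"
      then obtain u v where uv: "u \<in> D" "v \<in> D" "x = tens u v" by auto
      have "(\<lambda>p. x (p, q)) = fscale (v q) u" using uv by (cases q) (auto simp: tens_def fscale_def fun_eq_iff mult.commute)
      moreover have "(\<lambda>p. x (q, p)) = fscale (u q) v" using uv by (cases q) (auto simp: tens_def fscale_def fun_eq_iff)
      ultimately show "x \<in> ?G" using uv sD by (auto intro: fs.subspace_scale)
    qed
    show "ksubspace ?G"
      unfolding fs.subspace_def
    proof (intro conjI ballI allI)
      show "0 \<in> ?G" using fs.subspace_0[OF sD] by (simp add: zero_fun_def)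
    next
      fix x y assume "x \<in> ?G" "y \<in> ?G"
      then show "x + y \<in> ?G" using fs.subspace_add[OF sD] by (auto simp: plus_fun_def)
    next
      fix c x assume "x \<in> ?G"
      moreover have "(\<lambda>p. fscale c x (p, q)) = fscale c (\<lambda>p. x (p, q))"
        "(\<lambda>p. fscale c x (q, p)) = fscale c (\<lambda>p. x (q, p))" by (auto simp: fscale_def)
      ultimately show "fscale c x \<in> ?G" using fs.subspace_scale[OF sD] by auto
    qed
  qed
  then show ?thesis using DD by auto
qed

lemma subco_basis:
  assumes D: "subcoalgebra (D :: ('a::preorder \<times> 'a \<Rightarrow> 'k::field) set)" and f: "f \<in> D"
    and nz: "f (s, v) \<noteq> 0" and st: "s \<le> t" and tu: "t \<le> u" and uv: "u \<le> v"
  shows "eb (t, u) \<in> D"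
proof -
  define g1 where "g1 = (\<lambda>p. Delta f ((s, t), p))"
  have g1: "g1 \<in> D" using subco_eval[OF D f] by (simp add: g1_def)
  define g2 where "g2 = (\<lambda>p. Delta g1 (p, (u, v)))"
  have g2: "g2 \<in> D" using subco_eval[OF D g1] by (simp add: g2_def)
  have "g2 = fscale (f (s, v)) (eb (t, u))"
  proof
    fix p :: "'a \<times> 'a"
    obtain a b where p: "p = (a, b)" by (metis prod.collapse)
    have "t \<le> v" using tu uv by (rule order_trans)
    then show "g2 p = fscale (f (s, v)) (eb (t, u)) p"
      using st tu uv by (auto simp: p g2_def g1_def Delta_def fscale_def eb_def)
  qed
  then have "fscale (inverse (f (s, v))) g2 = eb (t, u)"
    using nz by (simp add: fscale_def fun_eq_iff)
  moreover have "ksubspace D" using D by (simp add: subcoalgebra_def)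
  ultimately show ?thesis using g2 fs.subspace_scale by metis
qed

definition cls :: "'a::preorder \<Rightarrow> 'a set" where
  "cls s = {y. s \<le> y \<and> y \<le> s}"

lemma sim_classes_iff: "Ci \<in> sim_classes \<longleftrightarrow> (\<exists>s. Ci = cls s)"
  by (auto simp: sim_classes_def quotient_def equiv_rel_def cls_def Image_def)

lemma Dblock_FS: "Dblock Ci = FS (Ci \<times> Ci)"
proof -
  have eq: "{ebasis x y | x y. x \<in> Ci \<and> y \<in> Ci} = eb ` (Ci \<times> Ci)"
    by (auto simp: ebasis_eb)
  show ?thesis unfolding Dblock_def eq by (rule span_eb)
qed

lemma Dblock_subco:
  assumes lf: "locally_finite TYPE('a::preorder)"
  shows "subcoalgebra (Dblock (cls s) :: ('a \<times> 'a \<Rightarrow> 'k::field) set)"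
  unfolding subcoalgebra_def
proof (intro conjI)
  show sub: "(Dblock (cls s) :: ('a \<times> 'a \<Rightarrow> 'k::field) set) \<subseteq> IC"
  proof -
    have "cls s \<times> cls s \<subseteq> {(a, b). a \<le> b}" unfolding cls_def by (blast intro: order_trans)
    then show ?thesis unfolding Dblock_FS IC_FS by (rule FS_mono)
  qed
  show "ksubspace (Dblock (cls s) :: ('a \<times> 'a \<Rightarrow> 'k::field) set)"
    by (simp add: Dblock_FS FS_subspace)
  show "Delta ` (Dblock (cls s) :: ('a \<times> 'a \<Rightarrow> 'k::field) set) \<subseteq> tensor_sub (Dblock (cls s)) (Dblock (cls s))"
  proof
    fix x assume "x \<in> Delta ` (Dblock (cls s) :: ('a \<times> 'a \<Rightarrow> 'k::field) set)"
    then obtain f where f: "f \<in> (Dblock (cls s) :: ('a \<times> 'a \<Rightarrow> 'k::field) set)" "x = Delta f" by auto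
    have fIC: "f \<in> IC" using f sub by auto
    have "Delta f \<in> FS ((cls s \<times> cls s) \<times> (cls s \<times> cls s))"
      unfolding Delta_FS[OF lf fIC]
    proof (intro allI impI)
      fix a d z assume h: "f (a, d) \<noteq> 0" "a \<le> z" "z \<le> d"
      have "a \<in> cls s" "d \<in> cls s" using f h(1) by (auto simp: Dblock_FS FS_def)
      then have "s \<le> a" "d \<le> s" "a \<le> s" "s \<le> d" by (auto simp: cls_def)
      then have "z \<in> cls s" using h order_trans unfolding cls_def by blast
      then show "((a, z), (z, d)) \<in> (cls s \<times> cls s) \<times> (cls s \<times> cls s)"
        using \<open>a \<in> cls s\<close> \<open>d \<in> cls s\<close> by simp
    qed
    then show "x \<in> tensor_sub (Dblock (cls s)) (Dblock (cls s))"
      using f by (simp add: Dblock_FS tensor_sub_FS)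
  qed
qed

lemma eb_nz: "(eb p :: 'p \<Rightarrow> 'k::field) \<noteq> 0"
  by (auto simp: eb_def fun_eq_iff)

lemma Dblock_sub:
  assumes D: "subcoalgebra (D :: ('a::preorder \<times> 'a \<Rightarrow> 'k::field) set)"
    and f: "f \<in> D" and nz: "f (a, b) \<noteq> 0" and a: "a \<in> cls s" and b: "b \<in> cls s"
  shows "Dblock (cls s) \<subseteq> D"
proof -
  have "kspan (eb ` (cls s \<times> cls s)) \<subseteq> D"
  proof (rule fs.span_minimal)
    show "eb ` (cls s \<times> cls s) \<subseteq> D"
    proof
      fix x :: "'a \<times> 'a \<Rightarrow> 'k" assume "x \<in> eb ` (cls s \<times> cls s)"
      then obtain t u where tu: "t \<in> cls s" "u \<in> cls s" "x = eb (t, u)" by auto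
      have c: "a \<le> s" "s \<le> b" "s \<le> t" "t \<le> s" "s \<le> u" "u \<le> s"
        using a b tu by (auto simp: cls_def)
      have "a \<le> t" "t \<le> u" "u \<le> b" using c order_trans by blast+
      then show "x \<in> D" using subco_basis[OF D f nz] tu by auto
    qed
    show "ksubspace D" using D by (simp add: subcoalgebra_def)
  qed
  then show ?thesis by (simp add: Dblock_FS span_eb)
qed

lemma nz_pair: "(f :: 'a \<times> 'b \<Rightarrow> 'k::zero) \<noteq> 0 \<Longrightarrow> \<exists>a b. f (a, b) \<noteq> 0"
  by (auto simp: fun_eq_iff)

lemma simple_iff:
  assumes lf: "locally_finite TYPE('a::preorder)"
  shows "{D. simple_subcoalgebra D} = (Dblock ` sim_classes :: ('a \<times> 'a \<Rightarrow> 'k::field) set set)"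
proof (intro set_eqI iffI)
  fix D :: "('a \<times> 'a \<Rightarrow> 'k::field) set"
  assume "D \<in> {D. simple_subcoalgebra D}"
  then have D: "subcoalgebra D" "D \<noteq> {0}"
    and min: "\<And>E. subcoalgebra E \<Longrightarrow> E \<subseteq> D \<Longrightarrow> E = {0} \<or> E = D"
    by (auto simp: simple_subcoalgebra_def)
  have "0 \<in> D" using D(1) fs.subspace_0 by (auto simp: subcoalgebra_def)
  then obtain f where f: "f \<in> D" "f \<noteq> 0" using D(2) by blast
  then obtain s v where nz: "f (s, v) \<noteq> 0" using nz_pair by blast
  have "f \<in> IC" using f D(1) by (auto simp: subcoalgebra_def)
  then have sv: "s \<le> v" using nz by (auto simp: IC_def)
  have ess: "eb (s, s) \<in> D" using subco_basis[OF D(1) f(1) nz order_refl order_refl sv] .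
  have ss: "s \<in> cls s" by (simp add: cls_def)
  have "eb (s, s) (s, s) \<noteq> (0::'k)" by (simp add: eb_def)
  then have sub: "Dblock (cls s) \<subseteq> D" using Dblock_sub[OF D(1) ess _ ss ss] by simp
  have "eb (s, s) \<in> (Dblock (cls s) :: ('a \<times> 'a \<Rightarrow> 'k::field) set)"
    using ss by (simp add: Dblock_FS eb_FS)
  moreover have "(eb (s, s) :: 'a \<times> 'a \<Rightarrow> 'k) \<noteq> 0" by (rule eb_nz)
  ultimately have "(Dblock (cls s) :: ('a \<times> 'a \<Rightarrow> 'k::field) set) \<noteq> {0}"
    by (intro notI) simp
  then have "Dblock (cls s) = D" using min[OF Dblock_subco[OF lf] sub] by blast
  moreover have "cls s \<in> sim_classes" by (auto simp: sim_classes_iff)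
  ultimately show "D \<in> Dblock ` sim_classes" by (auto intro: image_eqI)
next
  fix D :: "('a \<times> 'a \<Rightarrow> 'k::field) set"
  assume "D \<in> Dblock ` sim_classes"
  then obtain Ci where "Ci \<in> sim_classes" "D = Dblock Ci" by blast
  then obtain s where Ds: "D = Dblock (cls s)" by (auto simp: sim_classes_iff)
  have ss: "s \<in> cls s" by (simp add: cls_def)
  have sc: "subcoalgebra D" using Dblock_subco[OF lf] Ds by simp
  have "eb (s, s) \<in> D" using ss by (simp add: Ds Dblock_FS eb_FS)
  moreover have "(eb (s, s) :: 'a \<times> 'a \<Rightarrow> 'k) \<noteq> 0" by (rule eb_nz)
  ultimately have nz: "D \<noteq> {0}" by (intro notI) simp
  have "E = {0} \<or> E = D" if E: "subcoalgebra E" "E \<subseteq> D" for E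
  proof (cases "E = {0}")
    case False
    have "0 \<in> E" using E(1) fs.subspace_0 by (auto simp: subcoalgebra_def)
    then obtain f where f: "f \<in> E" "f \<noteq> 0" using False by blast
    then obtain a b where nzf: "f (a, b) \<noteq> 0" using nz_pair by blast
    have "f \<in> Dblock (cls s)" using f E(2) Ds by blast
    then have "f \<in> FS (cls s \<times> cls s)" by (simp add: Dblock_FS)
    then have ab: "a \<in> cls s" "b \<in> cls s" using nzf by (auto simp: FS_def)
    have "D \<subseteq> E" using Dblock_sub[OF E(1) f(1) nzf ab] Ds by simp
    then show ?thesis using E(2) by auto
  qed simp
  then show "D \<in> {D. simple_subcoalgebra D}" using sc nz by (auto simp: simple_subcoalgebra_def)
qed

lemma coradical_eq:
  assumes lf: "locally_finite TYPE('a::preorder)"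
  shows "(coradical :: ('a \<times> 'a \<Rightarrow> 'k::field) set) = kspan (\<Union>Ci\<in>sim_classes. Dblock Ci)"
  unfolding coradical_def simple_iff[OF lf] by simp

lemma blocks_FS:
  "kspan (\<Union>Ci\<in>sim_classes. Dblock Ci) = (FS {(x, y). (x::'a::preorder) \<le> y \<and> y \<le> x} :: ('a \<times> 'a \<Rightarrow> 'k::field) set)"
proof
  show "kspan (\<Union>Ci\<in>sim_classes. Dblock Ci) \<subseteq> (FS {(x, y). (x::'a::preorder) \<le> y \<and> y \<le> x} :: ('a \<times> 'a \<Rightarrow> 'k::field) set)"
  proof (rule fs.span_minimal)
    show "(\<Union>Ci\<in>sim_classes. Dblock Ci) \<subseteq> (FS {(x, y). (x::'a::preorder) \<le> y \<and> y \<le> x} :: ('a \<times> 'a \<Rightarrow> 'k::field) set)"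
    proof
      fix g :: "'a \<times> 'a \<Rightarrow> 'k" assume "g \<in> (\<Union>Ci\<in>sim_classes. Dblock Ci)"
      then obtain s where g: "g \<in> FS (cls s \<times> cls s)" by (auto simp: sim_classes_iff Dblock_FS)
      have "cls s \<times> cls s \<subseteq> {(x, y). (x::'a::preorder) \<le> y \<and> y \<le> x}"
        unfolding cls_def by (blast intro: order_trans)
      then show "g \<in> FS {(x, y). (x::'a::preorder) \<le> y \<and> y \<le> x}" using g by (auto simp: FS_def)
    qed
  qed (rule FS_subspace)
  have "eb ` {(x, y). (x::'a::preorder) \<le> y \<and> y \<le> x} \<subseteq> ((\<Union>Ci\<in>sim_classes. Dblock Ci) :: ('a \<times> 'a \<Rightarrow> 'k::field) set)"
  proof
    fix e :: "'a \<times> 'a \<Rightarrow> 'k" assume "e \<in> eb ` {(x, y). (x::'a::preorder) \<le> y \<and> y \<le> x}"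
    then obtain x y where xy: "x \<le> y" "y \<le> x" "e = eb (x, y)" by auto
    have "cls x \<in> sim_classes" using sim_classes_iff by blast
    moreover have "e \<in> (Dblock (cls x) :: ('a \<times> 'a \<Rightarrow> 'k::field) set)"
      using xy by (auto simp: Dblock_FS cls_def intro!: eb_FS)
    ultimately show "e \<in> ((\<Union>Ci\<in>sim_classes. Dblock Ci) :: ('a \<times> 'a \<Rightarrow> 'k::field) set)" by blast
  qed
  then have "kspan (eb ` {(x, y). (x::'a::preorder) \<le> y \<and> y \<le> x}) \<subseteq> ((kspan (\<Union>Ci\<in>sim_classes. Dblock Ci)) :: ('a \<times> 'a \<Rightarrow> 'k::field) set)"
    by (rule fs.span_mono)
  then show "(FS {(x, y). (x::'a::preorder) \<le> y \<and> y \<le> x} :: ('a \<times> 'a \<Rightarrow> 'k::field) set) \<subseteq> kspan (\<Union>Ci\<in>sim_classes. Dblock Ci)"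
    by (simp only: span_eb)
qed

lemma chain_lt:
  assumes "\<forall>i<n. f i < f (Suc i)"
  shows "i < j \<Longrightarrow> j \<le> n \<Longrightarrow> (f i :: 'a::preorder) < f j"
proof (induction j)
  case 0 then show ?case by simp
next
  case (Suc j)
  show ?case
  proof (cases "i = j")
    case True then show ?thesis using assms Suc.prems by simp
  next
    case False
    then have "f i < f j" using Suc by simp
    moreover have "f j < f (Suc j)" using assms Suc.prems by simp
    ultimately show ?thesis by (rule less_trans)
  qed
qed

lemma chain_bound:
  assumes lf: "locally_finite TYPE('a::preorder)" and hc: "has_chain (x::'a) y n"
  shows "n \<le> card {z. x \<le> z \<and> z \<le> y}"
proof -
  obtain f where f: "f 0 = x" "f n = y" "\<forall>i<n. f i < f (Suc i)" using hc by (auto simp: has_chain_def)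
  have lt: "i < j \<Longrightarrow> j \<le> n \<Longrightarrow> f i < f j" for i j using chain_lt[OF f(3)] .
  have inj: "inj_on f {0..n}"
  proof (rule inj_onI)
    fix i j assume "i \<in> {0..n}" "j \<in> {0..n}" "f i = f j"
    then show "i = j" using lt[of i j] lt[of j i] by (cases "i < j"; cases "j < i") auto
  qed
  have sub: "f ` {0..n} \<subseteq> {z. x \<le> z \<and> z \<le> y}"
  proof
    fix z assume "z \<in> f ` {0..n}"
    then obtain i where i: "i \<le> n" "z = f i" by auto
    have "x \<le> f i" using lt[of 0 i] i f(1) by (cases "i = 0") (auto intro: less_imp_le)
    moreover have "f i \<le> y" using lt[of i n] i f(2) by (cases "i = n") (auto intro: less_imp_le)
    ultimately show "z \<in> {z. x \<le> z \<and> z \<le> y}" using i by simp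
  qed
  have "card (f ` {0..n}) \<le> card {z. x \<le> z \<and> z \<le> y}"
    using sub lfD[OF lf] by (rule card_mono[rotated])
  moreover have "card (f ` {0..n}) = Suc n" using inj by (simp add: card_image)
  ultimately show ?thesis by simp
qed

lemma len_props:
  assumes lf: "locally_finite TYPE('a::preorder)" and xy: "(x::'a) \<le> y" and nyx: "\<not> y \<le> x"
  shows "interval_length x y > 0 \<and> has_chain x y (interval_length x y)"
    and "\<And>m. has_chain x y m \<Longrightarrow> m > 0 \<Longrightarrow> m \<le> interval_length x y"
proof -
  let ?P = "\<lambda>n. n > 0 \<and> has_chain x y n"
  have P1: "?P 1"
    unfolding has_chain_def using xy nyx
    by (intro conjI exI[of _ "\<lambda>i. if i = 0 then x else y"]) (auto simp: less_le_not_le)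
  have bnd: "\<forall>m. ?P m \<longrightarrow> m \<le> card {z. x \<le> z \<and> z \<le> y}"
    using chain_bound[OF lf] by blast
  have eq: "interval_length x y = (GREATEST n. ?P n)" using nyx by (simp add: interval_length_def)
  show "interval_length x y > 0 \<and> has_chain x y (interval_length x y)"
    unfolding eq using GreatestI_nat[of ?P 1, OF P1] bnd by blast
  show "\<And>m. has_chain x y m \<Longrightarrow> m > 0 \<Longrightarrow> m \<le> interval_length x y"
    unfolding eq using Greatest_le_nat[of ?P] bnd by blast
qed

lemma len_zero: "(x::'a::preorder) \<le> y \<Longrightarrow> y \<le> x \<Longrightarrow> interval_length x y = 0"
  by (simp add: interval_length_def)

lemma len_zero_iff:
  assumes lf: "locally_finite TYPE('a::preorder)" and xy: "(x::'a) \<le> y"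
  shows "interval_length x y = 0 \<longleftrightarrow> y \<le> x"
proof (cases "y \<le> x")
  case True then show ?thesis using len_zero[OF xy] by simp
next
  case False then show ?thesis using len_props(1)[OF lf xy False] by simp
qed

lemma len_step:
  assumes lf: "locally_finite TYPE('a::preorder)" and ad: "(a::'a) \<le> d"
  shows "interval_length a d \<le> Suc n \<longleftrightarrow>
         (\<forall>b. a \<le> b \<longrightarrow> b \<le> d \<longrightarrow> b \<le> a \<or> interval_length b d \<le> n)"
proof
  assume L: "interval_length a d \<le> Suc n"
  show "\<forall>b. a \<le> b \<longrightarrow> b \<le> d \<longrightarrow> b \<le> a \<or> interval_length b d \<le> n"
  proof (intro allI impI)
    fix b assume ab: "a \<le> b" and bd: "b \<le> d"
    show "b \<le> a \<or> interval_length b d \<le> n"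
    proof (cases "b \<le> a")
      case False
      show ?thesis
      proof (cases "d \<le> b")
        case True then show ?thesis using len_zero[OF bd] by simp
      next
        case ndb: False
        define m where "m = interval_length b d"
        have m: "m > 0" "has_chain b d m" using len_props(1)[OF lf bd ndb] by (auto simp: m_def)
        then obtain g where g: "g 0 = b" "g m = d" "\<forall>i<m. g i < g (Suc i)" by (auto simp: has_chain_def)
        define h where "h = (\<lambda>i. if i = 0 then a else g (i - 1))"
        have "has_chain a d (Suc m)"
          unfolding has_chain_def
        proof (intro exI[of _ h] conjI allI impI)
          show "h 0 = a" by (simp add: h_def)
          show "h (Suc m) = d" using g by (simp add: h_def)
          fix i assume i: "i < Suc m"
          show "h i < h (Suc i)"
          proof (cases i)
            case 0 then show ?thesis using g(1) ab False by (simp add: h_def less_le_not_le)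
          next
            case (Suc j) then show ?thesis using g(3) i by (simp add: h_def)
          qed
        qed
        moreover have "\<not> d \<le> a" using False bd order_trans by blast
        ultimately have "Suc m \<le> interval_length a d" using len_props(2)[OF lf ad] by blast
        then show ?thesis using L by (simp add: m_def)
      qed
    qed simp
  qed
next
  assume R: "\<forall>b. a \<le> b \<longrightarrow> b \<le> d \<longrightarrow> b \<le> a \<or> interval_length b d \<le> n"
  show "interval_length a d \<le> Suc n"
  proof (cases "d \<le> a")
    case True then show ?thesis using len_zero[OF ad] by simp
  next
    case nda: False
    define m where "m = interval_length a d"
    have m: "m > 0" "has_chain a d m" using len_props(1)[OF lf ad nda] by (auto simp: m_def)
    then obtain f where f: "f 0 = a" "f m = d" "\<forall>i<m. f i < f (Suc i)" by (auto simp: has_chain_def)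
    have lt: "i < j \<Longrightarrow> j \<le> m \<Longrightarrow> f i < f j" for i j using chain_lt[OF f(3)] .
    have a1: "a < f 1" using lt[of 0 1] m(1) f(1) by simp
    have f1d: "f 1 \<le> d" using lt[of 1 m] m(1) f(2) by (cases "m = 1") (auto intro: less_imp_le)
    have "interval_length (f 1) d \<le> n"
      using R a1 f1d by (auto simp: less_le_not_le)
    show ?thesis
    proof (cases "m = 1")
      case True then show ?thesis by (simp add: m_def[symmetric])
    next
      case False
      then have m2: "m - 1 > 0" using m(1) by simp
      have hc: "has_chain (f 1) d (m - 1)"
        unfolding has_chain_def
        by (intro exI[of _ "\<lambda>i. f (Suc i)"]) (use f m(1) in auto)
      have "f 1 < f m" using lt[of 1 m] False m(1) by simp
      then have "\<not> d \<le> f 1" using f(2) by (simp add: less_le_not_le)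
      then have "m - 1 \<le> interval_length (f 1) d"
        using len_props(2)[OF lf f1d _ hc m2] by simp
      then show ?thesis using \<open>interval_length (f 1) d \<le> n\<close> by (simp add: m_def)
    qed
  qed
qed

lemma Pn_span:
  "kspan {ebasis x y | x y. (x::'a::preorder) \<le> y \<and> interval_length x y \<le> n}
   = (FS {(x, y). x \<le> y \<and> interval_length x y \<le> n} :: ('a \<times> 'a \<Rightarrow> 'k::field) set)"
proof -
  have eq: "{ebasis x y | x y. (x::'a::preorder) \<le> y \<and> interval_length x y \<le> n}
      = (eb ` {(x, y). x \<le> y \<and> interval_length x y \<le> n} :: ('a \<times> 'a \<Rightarrow> 'k::field) set)"
    by (auto simp: ebasis_eb)
  show ?thesis unfolding eq by (rule span_eb)
qed

lemma P0_eq: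
  assumes lf: "locally_finite TYPE('a::preorder)"
  shows "{(x, y). (x::'a) \<le> y \<and> y \<le> x} = {(x, y). x \<le> y \<and> interval_length x y \<le> 0}"
  using len_zero_iff[OF lf] by auto

lemma wedge_FS:
  "wedge (FS A) (FS B) = {c \<in> IC. Delta c \<in> FS (A \<times> {(a, b). (a::'a::preorder) \<le> b} \<union> {(a, b). a \<le> b} \<times> B)}"
proof -
  have e1: "tensor_sub (FS A) IC = (FS (A \<times> {(a, b). (a::'a) \<le> b}) :: (('a \<times> 'a) \<times> ('a \<times> 'a) \<Rightarrow> 'k::field) set)"
    by (simp only: IC_FS tensor_sub_FS)
  have e2: "tensor_sub IC (FS B) = (FS ({(a, b). (a::'a) \<le> b} \<times> B) :: (('a \<times> 'a) \<times> ('a \<times> 'a) \<Rightarrow> 'k::field) set)"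
    by (simp only: IC_FS tensor_sub_FS)
  show ?thesis unfolding wedge_def e1 e2 span_FS_Un ..
qed

lemma wedge_step:
  assumes lf: "locally_finite TYPE('a::preorder)"
  shows "wedge (FS {(x, y). (x::'a) \<le> y \<and> y \<le> x}) (FS {(x, y). x \<le> y \<and> interval_length x y \<le> n})
    = (FS {(x, y). x \<le> y \<and> interval_length x y \<le> Suc n} :: ('a \<times> 'a \<Rightarrow> 'k::field) set)"
    (is "wedge (FS ?Q) (FS ?P) = FS ?S")
  unfolding wedge_FS
proof (intro set_eqI iffI)
  let ?R = "{(a, b). (a::'a) \<le> b}"
  fix c :: "'a \<times> 'a \<Rightarrow> 'k"
  assume "c \<in> {c \<in> IC. Delta c \<in> FS (?Q \<times> ?R \<union> ?R \<times> ?P)}"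
  then have cIC: "c \<in> IC" and D: "Delta c \<in> FS (?Q \<times> ?R \<union> ?R \<times> ?P)" by simp_all
  have cond: "\<forall>a d z. c (a, d) \<noteq> 0 \<longrightarrow> a \<le> z \<longrightarrow> z \<le> d \<longrightarrow> ((a, z), (z, d)) \<in> ?Q \<times> ?R \<union> ?R \<times> ?P"
    using D by (simp only: Delta_FS[OF lf cIC])
  have "{p. c p \<noteq> 0} \<subseteq> ?S"
  proof
    fix p assume p: "p \<in> {p. c p \<noteq> 0}"
    obtain a d where pe: "p = (a, d)" by (metis prod.collapse)
    have nz: "c (a, d) \<noteq> 0" using p pe by simp
    have ad: "a \<le> d" using cIC nz by (auto simp: IC_def)
    have "\<forall>b. a \<le> b \<longrightarrow> b \<le> d \<longrightarrow> b \<le> a \<or> interval_length b d \<le> n"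
    proof (intro allI impI)
      fix b assume "a \<le> b" "b \<le> d"
      then have "((a, b), (b, d)) \<in> ?Q \<times> ?R \<union> ?R \<times> ?P" using cond nz by blast
      then show "b \<le> a \<or> interval_length b d \<le> n" by auto
    qed
    then have "interval_length a d \<le> Suc n" using len_step[OF lf ad] by blast
    then show "p \<in> ?S" using ad pe by simp
  qed
  then show "c \<in> FS ?S" using cIC by (simp add: IC_def FS_def)
next
  let ?R = "{(a, b). (a::'a) \<le> b}"
  fix c :: "'a \<times> 'a \<Rightarrow> 'k"
  assume c: "c \<in> FS ?S"
  have "?S \<subseteq> ?R" by auto
  then have "c \<in> FS ?R" using c FS_mono by blast
  then have cIC: "c \<in> IC" by (simp only: IC_FS)
  have "\<forall>a d z. c (a, d) \<noteq> 0 \<longrightarrow> a \<le> z \<longrightarrow> z \<le> d \<longrightarrow> ((a, z), (z, d)) \<in> ?Q \<times> ?R \<union> ?R \<times> ?P"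
  proof (intro allI impI)
    fix a d z assume h: "c (a, d) \<noteq> 0" "a \<le> z" "z \<le> d"
    then have "(a, d) \<in> ?S" using c by (auto simp: FS_def)
    then have ad: "a \<le> d" and L: "interval_length a d \<le> Suc n" by auto
    have "z \<le> a \<or> interval_length z d \<le> n" using len_step[OF lf ad] L h by blast
    then show "((a, z), (z, d)) \<in> ?Q \<times> ?R \<union> ?R \<times> ?P" using h by auto
  qed
  then have "Delta c \<in> FS (?Q \<times> ?R \<union> ?R \<times> ?P)" by (simp only: Delta_FS[OF lf cIC])
  then show "c \<in> {c \<in> IC. Delta c \<in> FS (?Q \<times> ?R \<union> ?R \<times> ?P)}" using cIC by simp
qed

theorem mainTheorem4:
  assumes "locally_finite TYPE('a::preorder)"
  shows "(coradical :: ('a \<times> 'a \<Rightarrow> 'k::field) set) = kspan (\<Union>Ci\<in>sim_classes. Dblock Ci)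
       \<and> (\<forall>n. (coradical_filt n :: ('a \<times> 'a \<Rightarrow> 'k::field) set) =
              kspan {ebasis x y | x y. x \<le> y \<and> interval_length x y \<le> n})"
proof
  note lf = assms
  show C0: "(coradical :: ('a \<times> 'a \<Rightarrow> 'k::field) set) = kspan (\<Union>Ci\<in>sim_classes. Dblock Ci)"
    by (rule coradical_eq[OF lf])
  have "(coradical_filt n :: ('a \<times> 'a \<Rightarrow> 'k::field) set) = FS {(x, y). x \<le> y \<and> interval_length x y \<le> n}" for n
  proof (induction n)
    case 0
    have "(coradical :: ('a \<times> 'a \<Rightarrow> 'k::field) set) = FS {(x, y). (x::'a) \<le> y \<and> y \<le> x}"
      by (simp only: C0 blocks_FS)
    also have "\<dots> = FS {(x, y). x \<le> y \<and> interval_length x y \<le> 0}"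
      by (simp only: P0_eq[OF lf])
    finally show ?case by (simp only: coradical_filt.simps)
  next
    case (Suc n)
    have cor: "(coradical :: ('a \<times> 'a \<Rightarrow> 'k::field) set) = FS {(x, y). (x::'a) \<le> y \<and> y \<le> x}"
      by (simp only: C0 blocks_FS)
    show ?case by (simp only: coradical_filt.simps Suc.IH cor wedge_step[OF lf])
  qed
  then show "\<forall>n. (coradical_filt n :: ('a \<times> 'a \<Rightarrow> 'k::field) set) =
              kspan {ebasis x y | x y. x \<le> y \<and> interval_length x y \<le> n}"
    by (simp add: Pn_span)
qed

end
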